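(* Let $k\colon\mathbb{R}\setminus\{0\}\to[0,\infty)$ satisfy: (a) $k$ is $C^2$ on $\mathbb{R}\setminus\{0\}$ and $(1+t^2)^m k^{(n)}(t)$ is bounded for all $m,n\in\{0,1,2\}$; (b) $k$ is increasing on $(-\infty,0)$ and decreasing on $(0,\infty)$; (c) $k$ is strictly positive on $\mathbb{R}\setminus\{0\}$. Put $\tilde{k}(t)=\mathrm{sign}(t)k(t)$, $H_k(z)=z+z\int_{\mathbb{R}}\frac{\tilde{k}(t)}{z-t}\,\mathrm{d}t$ for $z\in\mathbb{C}^+$, and $F_k(x+\mathrm{i}y)=\int_{\mathbb{R}}\frac{|t|k(t)}{(x-t)^2+y^2}\,\mathrm{d}t$ for $x\in\mathbb{R}$, $y>0$. Then: (i) for every $x\in\mathbb{R}$ there is a unique $v_k(x)\in(0,\infty)$ such that $F_k(x+\mathrm{i}v_k(x))=1$; (ii) $\{z\in\mathbb{C}^+: H_k(z)\in\mathbb{R}\}=\{x+\mathrm{i}v_k(x): x\in\mathbb{R}\}$; (iii) $\{z\in\mathbb{C}^+: H_k(z)\in\mathbb{C}^+\}=\{x+\mathrm{i}y: x\in\mathbb{R},\ y>v_k(x)\}$; (iv) the function $v_k\colon\mathbb{R}\to(0,\infty)$ is (real) analytic on $\mathbb{R}$; (v) $\lim_{|x|\to\infty}v_k(x)=0$.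
   Context: $\mathbb{C}^+$ denotes the open upper half plane. *)

theory Defs
  imports "HOL-Analysis.Analysis"
begin

definition Hk :: "(real \<Rightarrow> real) \<Rightarrow> complex \<Rightarrow> complex" where
  "Hk k z = z + z * (LINT t|lborel. complex_of_real (sgn t * k t) / (z - complex_of_real t))"

definition Fk :: "(real \<Rightarrow> real) \<Rightarrow> real \<Rightarrow> real \<Rightarrow> real" where
  "Fk k x y = (LINT t|lborel. \<bar>t\<bar> * k t / ((x - t)^2 + y^2))"

definition vk :: "(real \<Rightarrow> real) \<Rightarrow> real \<Rightarrow> real" where
  "vk k x = (THE y. 0 < y \<and> Fk k x y = 1)"

definition real_analytic_on :: "(real \<Rightarrow> real) \<Rightarrow> real set \<Rightarrow> bool" where
  "real_analytic_on f S \<longleftrightarrow> (\<forall>x0\<in>S. \<exists>r>0. \<exists>a::nat \<Rightarrow> real.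
      \<forall>x. \<bar>x - x0\<bar> < r \<longrightarrow> (\<lambda>n. a n * (x - x0) ^ n) sums f x)"

end

theory Submission
  imports Defs "HOL-Probability.Sinc_Integral" "HOL-Complex_Analysis.Complex_Analysis"
begin


lemma analytic_from_curve:
  fixes H :: "complex \<Rightarrow> complex" and v :: "real \<Rightarrow> real"
  assumes holH: "H holomorphic_on S" and opS: "open S"
    and curve: "\<And>z. z \<in> S \<Longrightarrow> H z \<in> \<real> \<Longrightarrow> Im z = v (Re z)"
    and z0S: "Complex x0 (v x0) \<in> S"
    and Hz0: "H (Complex x0 (v x0)) \<in> \<real>"
    and dpos: "0 < Re (deriv H (Complex x0 (v x0)))"
  shows "\<exists>r>0. \<exists>a::nat\<Rightarrow>real. \<forall>x. \<bar>x - x0\<bar> < r \<longrightarrow> (\<lambda>n. a n * (x - x0) ^ n) sums v x"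
proof -
  define z0 where "z0 = Complex x0 (v x0)"
  have dnz: "deriv H z0 \<noteq> 0" using dpos z0_def by auto
  obtain r where r: "r > 0" "ball z0 r \<subseteq> S" "inj_on H (ball z0 r)"
    using has_complex_derivative_locally_injective[OF holH z0S[folded z0_def] opS dnz] by blast
  have holHb: "H holomorphic_on ball z0 r" using holH r(2) holomorphic_on_subset by blast
  obtain G where G: "G holomorphic_on (H ` ball z0 r)"
      "\<And>z. z \<in> ball z0 r \<Longrightarrow> deriv H z * deriv G (H z) = 1"
      "\<And>z. z \<in> ball z0 r \<Longrightarrow> G (H z) = z"
    using holomorphic_has_inverse[OF holHb open_ball r(3)] by blast
  define V where "V = H ` ball z0 r"
  have opV: "open V" unfolding V_def using open_mapping_thm3[OF holHb open_ball r(3)] .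
  have GV: "\<And>w. w \<in> V \<Longrightarrow> G w \<in> ball z0 r \<and> H (G w) = w" unfolding V_def using G(3) by auto
  define u0 where "u0 = H z0"
  have u0V: "u0 \<in> V" unfolding u0_def V_def using r(1) by auto
  have Gu0: "G u0 = z0" using G(3)[of z0] r(1) u0_def by auto
  have u0real: "u0 = of_real (Re u0)" using Hz0[folded z0_def] u0_def by (simp add: complex_is_Real_iff complex_eq_iff)
  have dGu0: "deriv G u0 = 1 / deriv H z0" using G(2)[of z0] r(1) u0_def dnz by (auto simp: field_simps)
  have holGV: "G holomorphic_on V" using G(1) V_def by simp
  have DG: "\<And>w. w \<in> V \<Longrightarrow> (G has_field_derivative deriv G w) (at w)"
    using holGV opV holomorphic_derivI by blast
  define W where "W = V \<inter> {w. cnj w \<in> V}"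
  have "open (cnj -` V)" by (rule continuous_open_vimage[OF opV]) (intro continuous_intros)
  then have opW: "open W" unfolding W_def by (intro open_Int opV) (simp add: vimage_def)
  define p where "p = (\<lambda>w. (G w + cnj (G (cnj w))) / 2)"
  have Dp: "(p has_field_derivative (deriv G w + cnj (deriv G (cnj w))) / 2) (at w)" if "w \<in> W" for w
  proof -
    have "((cnj \<circ> G \<circ> cnj) has_field_derivative cnj (deriv G (cnj w))) (at w)"
      by (rule has_field_derivative_cnj_cnj) (use DG that W_def in auto)
    then have "((\<lambda>w. cnj (G (cnj w))) has_field_derivative cnj (deriv G (cnj w))) (at w)"
      by (simp add: o_def)
    then show ?thesis unfolding p_def using DG[of w] that W_def
      by (auto intro!: derivative_eq_intros)
  qed
  have holp: "p holomorphic_on W" using Dp opW holomorphic_on_open by blast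
  have u0W: "u0 \<in> W" unfolding W_def using u0V u0real by (metis complex_cnj_complex_of_real mem_Collect_eq IntI)
  have dp0: "deriv p u0 = of_real (Re (deriv G u0))"
    using DERIV_imp_deriv[OF Dp[OF u0W]] u0real
    by (metis complex_add_cnj complex_cnj_complex_of_real nonzero_mult_div_cancel_left zero_neq_numeral
        mult.commute of_real_mult of_real_numeral)
  have ReG: "0 < Re (deriv G u0)" using dGu0 dpos z0_def dnz
    by (simp add: Re_divide divide_pos_pos complex_neq_0)
  obtain r2 where r2: "r2 > 0" "ball u0 r2 \<subseteq> W" "inj_on p (ball u0 r2)"
    using has_complex_derivative_locally_injective[OF holp u0W opW] dp0 ReG by force
  have holpb: "p holomorphic_on ball u0 r2" using holp r2(2) holomorphic_on_subset by blast
  obtain q where q: "q holomorphic_on (p ` ball u0 r2)"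
      "\<And>z. z \<in> ball u0 r2 \<Longrightarrow> q (p z) = z"
    using holomorphic_has_inverse[OF holpb open_ball r2(3)] by blast
  define Q where "Q = p ` ball u0 r2"
  have opQ: "open Q" unfolding Q_def using open_mapping_thm3[OF holpb open_ball r2(3)] .
  define ps where "ps = (\<lambda>s. Re (G (of_real s)))"
  define u0r where "u0r = Re u0"
  have preal: "p (of_real s) = of_real (ps s)" for s
    unfolding p_def ps_def by (simp add: complex_add_cnj)
  have ps0: "ps u0r = x0" unfolding ps_def u0r_def using u0real Gu0 z0_def by simp
  have Dps: "DERIV ps u0r :> Re (deriv G u0)"
  proof -
    have "((\<lambda>s. of_real s :: complex) has_vector_derivative 1) (at u0r)"
      by (rule has_vector_derivative_real_field) (auto intro!: derivative_eq_intros)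
    from field_vector_diff_chain_at[OF this, of G "deriv G u0"] DG[OF u0V] u0real u0r_def
    have "((\<lambda>s. G (of_real s)) has_vector_derivative deriv G u0) (at u0r)" by (simp add: o_def)
    then have "((\<lambda>s. G (of_real s)) has_derivative (\<lambda>h. h *\<^sub>R deriv G u0)) (at u0r)"
      by (simp add: has_vector_derivative_def)
    from has_derivative_Re[OF this]
    have "(ps has_derivative (\<lambda>h. Re (h *\<^sub>R deriv G u0))) (at u0r)" unfolding ps_def .
    then have "(ps has_derivative (\<lambda>h. h * Re (deriv G u0))) (at u0r)" by simp
    moreover have "(\<lambda>h. h * Re (deriv G u0)) = (*) (Re (deriv G u0))" by (auto simp: fun_eq_iff)
    ultimately show ?thesis by (simp add: has_field_derivative_def)
  qed
  obtain d1 where d1: "d1 > 0" "\<And>h. h > 0 \<Longrightarrow> h < d1 \<Longrightarrow> ps u0r < ps (u0r + h)"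
    using DERIV_pos_inc_right[OF Dps ReG] by blast
  obtain d2 where d2: "d2 > 0" "\<And>h. h > 0 \<Longrightarrow> h < d2 \<Longrightarrow> ps (u0r - h) < ps u0r"
    using DERIV_pos_inc_left[OF Dps ReG] by blast
  define \<delta> where "\<delta> = min (min d1 d2) r2 / 2"
  have \<delta>: "\<delta> > 0" "\<delta> < d1" "\<delta> < d2" "\<delta> < r2" unfolding \<delta>_def using d1 d2 r2 by auto
  define a where "a = ps (u0r - \<delta>)"
  define b where "b = ps (u0r + \<delta>)"
  have ab: "a < x0" "x0 < b" using d1(2)[of \<delta>] d2(2)[of \<delta>] \<delta> ps0 a_def b_def by auto
  have inball: "of_real s \<in> ball u0 r2" if "u0r - \<delta> \<le> s" "s \<le> u0r + \<delta>" for s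
  proof -
    have "dist (of_real s) u0 = \<bar>s - u0r\<bar>" using u0real u0r_def
      by (metis dist_commute dist_of_real dist_real_def abs_minus_commute)
    then show ?thesis using that \<delta> by (auto simp: dist_commute)
  qed
  have WV: "W \<subseteq> V" unfolding W_def by auto
  have contps: "continuous_on {u0r - \<delta> .. u0r + \<delta>} ps"
  proof -
    have "continuous_on (of_real ` {u0r - \<delta> .. u0r + \<delta>}) G"
    proof (rule continuous_on_subset[OF holomorphic_on_imp_continuous_on[OF holGV]], rule image_subsetI)
      fix s assume "s \<in> {u0r - \<delta> .. u0r + \<delta>}"
      then have "of_real s \<in> ball u0 r2" using inball by auto
      then show "of_real s \<in> V" using r2(2) WV by blast
    qed
    then show ?thesis unfolding ps_def
      by (intro continuous_on_Re continuous_on_compose[of _ of_real G, unfolded o_def]) 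
         (auto intro: continuous_intros)
  qed
  define \<epsilon> where "\<epsilon> = min (x0 - a) (b - x0)"
  have \<epsilon>: "\<epsilon> > 0" using ab \<epsilon>_def by auto
  have key: "of_real x \<in> Q \<and> v x = Re (- \<i> * G (q (of_real x)))" if "\<bar>x - x0\<bar> < \<epsilon>" for x
  proof -
    have "a \<le> x" "x \<le> b" using that \<epsilon>_def by auto
    then obtain s where s: "u0r - \<delta> \<le> s" "s \<le> u0r + \<delta>" "ps s = x"
      using IVT'[of ps "u0r - \<delta>" x "u0r + \<delta>"] contps \<delta> a_def b_def by auto
    have sb: "of_real s \<in> ball u0 r2" using inball s by auto
    have px: "p (of_real s) = of_real x" using preal s by simp
    have xQ: "of_real x \<in> Q" using sb px Q_def by (metis imageI)
    have qx: "q (of_real x) = of_real s" using q(2)[OF sb] px by simp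
    have sV: "of_real s \<in> V" using sb r2(2) WV by auto
    have "G (of_real s) \<in> S" "H (G (of_real s)) \<in> \<real>" using GV[OF sV] r(2) by auto
    then have "Im (G (of_real s)) = v (Re (G (of_real s)))" using curve by blast
    then have "v x = Im (G (of_real s))" using s ps_def by simp
    then show ?thesis using xQ qx by simp
  qed
  define \<phi> where "\<phi> = (\<lambda>w. - \<i> * G (q w))"
  have holphi: "\<phi> holomorphic_on Q"
  proof -
    have "q ` Q \<subseteq> V" using q(2) r2(2) WV Q_def by auto
    then have "(G \<circ> q) holomorphic_on Q" using holomorphic_on_compose_gen q(1) holGV Q_def by metis
    then show ?thesis unfolding \<phi>_def o_def by (intro holomorphic_intros) auto
  qed
  have x0Q: "of_real x0 \<in> Q" using key[of x0] \<epsilon> by simp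
  obtain \<rho> where \<rho>: "\<rho> > 0" "ball (of_real x0) \<rho> \<subseteq> Q" using opQ x0Q open_contains_ball by blast
  have holphib: "\<phi> holomorphic_on ball (of_real x0) \<rho>" using holphi \<rho> holomorphic_on_subset by blast
  define c where "c = (\<lambda>n. (deriv ^^ n) \<phi> (of_real x0) / fact n)"
  show ?thesis
  proof (intro exI conjI allI impI)
    show "min \<rho> \<epsilon> > 0" using \<rho> \<epsilon> by simp
    fix x assume x: "\<bar>x - x0\<bar> < min \<rho> \<epsilon>"
    have xb: "(of_real x :: complex) \<in> ball (of_real x0) \<rho>" using x by (simp add: dist_of_real dist_real_def abs_minus_commute)
    have "(\<lambda>n. c n * (of_real x - of_real x0) ^ n) sums \<phi> (of_real x)"
      unfolding c_def by (rule holomorphic_power_series[OF holphib xb])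
    from sums_Re[OF this] have "(\<lambda>n. Re (c n) * (x - x0) ^ n) sums Re (\<phi> (of_real x))"
      by (simp flip: of_real_diff of_real_power)
    then show "(\<lambda>n. Re (c n) * (x - x0) ^ n) sums v x" using key[of x] x \<phi>_def by simp
  qed
qed




lemma int_w: "integrable lborel (\<lambda>x::real. inverse (1 + x^2))"
  using integrable_inverse_1_plus_square by (simp add: set_integrable_def einterval_eq_UNIV)

lemma int_bound:
  fixes f :: "real \<Rightarrow> 'a::{banach,second_countable_topology}"
  assumes "f \<in> borel_measurable lborel" "\<And>t. norm (f t) \<le> C * inverse (1 + t^2)"
  shows "integrable lborel f"
proof (rule Bochner_Integration.integrable_bound[OF _ assms(1) AE_I2])
  show "integrable lborel (\<lambda>t. C * inverse (1 + t^2))" using int_w by simp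
  fix t :: real
  have "0 \<le> norm (f t)" by simp
  also have "\<dots> \<le> C * inverse (1 + t^2)" using assms(2) .
  finally show "norm (f t) \<le> norm (C * inverse (1 + t^2))" using assms(2)[of t] by simp
qed

lemma pos_integral:
  fixes f :: "real \<Rightarrow> real"
  assumes "integrable lborel f" "\<And>t. 0 \<le> f t" "\<And>t. t \<noteq> 0 \<Longrightarrow> 0 < f t"
  shows "0 < integral\<^sup>L lborel f"
proof -
  have ge: "0 \<le> integral\<^sup>L lborel f" using assms by (intro integral_nonneg_AE) auto
  have "integral\<^sup>L lborel f \<noteq> 0"
  proof
    assume "integral\<^sup>L lborel f = 0"
    then have "AE t in lborel. f t = 0" using integral_nonneg_eq_0_iff_AE[OF assms(1)] assms(2) by auto
    moreover have "AE t in lborel. t \<noteq> (0::real)" by (rule AE_lborel_singleton)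
    ultimately have "AE t::real in lborel. False" by eventually_elim (use assms(3) in force)
    then have "emeasure lborel (UNIV :: real set) = 0"
      using AE_iff_measurable[of UNIV lborel "\<lambda>_. False"] by auto
    then show False by simp
  qed
  then show ?thesis using ge by simp
qed

locale kassm =
  fixes k :: "real \<Rightarrow> real" and B :: real
  assumes cont: "continuous_on (-{0}) k"
    and pos: "\<And>t. t \<noteq> 0 \<Longrightarrow> 0 < k t"
    and incr: "mono_on {..<0} k"
    and decr: "antimono_on {0<..} k"
    and bnd: "\<And>t. t \<noteq> 0 \<Longrightarrow> (1 + t^2)^2 * k t \<le> B"
begin

lemma k_meas[measurable]: "k \<in> borel_measurable borel"
  by (rule borel_measurable_continuous_countable_exceptions[OF _ cont]) simp

lemma B_pos: "0 < B"
proof -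
  have "0 < (1 + 1^2)^2 * k 1" using pos[of 1] by simp
  also have "\<dots> \<le> B" using bnd[of 1] by simp
  finally show ?thesis .
qed

lemma b_k: "t \<noteq> 0 \<Longrightarrow> k t * (1 + t^2) \<le> B * inverse (1 + t^2)"
proof -
  assume t: "t \<noteq> 0"
  have p: "0 < 1 + t^2" by (simp add: add_pos_nonneg)
  have "k t * (1 + t^2) = (1 + t^2)^2 * k t / (1 + t^2)" using p by (simp add: power2_eq_square field_simps)
  also have "\<dots> \<le> B / (1 + t^2)" using bnd[OF t] p by (simp add: divide_right_mono)
  finally show ?thesis by (simp add: field_simps)
qed

lemma abs_le_sq: "\<bar>t::real\<bar> \<le> 1 + t^2"
proof -
  have e: "t^2 = \<bar>t\<bar> * \<bar>t\<bar>" by (simp add: power2_eq_square)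
  show ?thesis
  proof (cases "\<bar>t\<bar> \<le> 1")
    case True then show ?thesis by (simp add: add_increasing2)
  next
    case False
    then have "\<bar>t\<bar> * 1 \<le> \<bar>t\<bar> * \<bar>t\<bar>" by (intro mult_left_mono) auto
    then show ?thesis using e by simp
  qed
qed

lemma k_nonneg: "t \<noteq> 0 \<Longrightarrow> 0 \<le> k t" using pos[of t] by simp

lemma b_sk: "\<bar>sgn t * k t\<bar> \<le> B * inverse (1 + t^2)"
proof (cases "t = 0")
  case True then show ?thesis using B_pos by simp
next
  case False
  have "\<bar>sgn t * k t\<bar> = k t" using False k_nonneg[OF False] by (simp add: abs_mult)
  also have "\<dots> \<le> k t * (1 + t^2)" using k_nonneg[OF False] by (simp add: mult_le_cancel_left1)
  also have "\<dots> \<le> B * inverse (1 + t^2)" using b_k[OF False] .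
  finally show ?thesis .
qed

lemma b_g: "\<bar>t\<bar> * k t \<le> B * inverse (1 + t^2)"
proof (cases "t = 0")
  case True then show ?thesis using B_pos by simp
next
  case False
  have "\<bar>t\<bar> * k t \<le> (1 + t^2) * k t" using k_nonneg[OF False] abs_le_sq by (rule mult_right_mono[rotated])
  also have "\<dots> \<le> B * inverse (1 + t^2)" using b_k[OF False] by (simp add: mult.commute)
  finally show ?thesis .
qed

lemma b_g2: "\<bar>t\<bar> * (1 + \<bar>t\<bar>) * k t \<le> 2 * B * inverse (1 + t^2)"
proof (cases "t = 0")
  case True then show ?thesis using B_pos by simp
next
  case False
  have "\<bar>t\<bar> * (1 + \<bar>t\<bar>) \<le> 2 * (1 + t^2)" using abs_le_sq[of t] by (simp add: algebra_simps power2_eq_square abs_mult_self)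
  then have "\<bar>t\<bar> * (1 + \<bar>t\<bar>) * k t \<le> 2 * (1 + t^2) * k t" using k_nonneg[OF False] by (rule mult_right_mono)
  also have "\<dots> = 2 * (k t * (1 + t^2))" by simp
  also have "\<dots> \<le> 2 * B * inverse (1 + t^2)" using b_k[OF False] by linarith
  finally show ?thesis .
qed

lemma g_nonneg: "0 \<le> \<bar>t\<bar> * k t" by (cases "t = 0") (simp_all add: k_nonneg)
lemma g_pos: "t \<noteq> 0 \<Longrightarrow> 0 < \<bar>t\<bar> * k t" using pos by simp

definition M where "M = (LINT t|lborel. \<bar>t\<bar> * k t)"

lemma int_g: "integrable lborel (\<lambda>t. \<bar>t\<bar> * k t)"
  by (rule int_bound[where C=B]) (use b_g g_nonneg in auto)

lemma int_F: "0 < y \<Longrightarrow> integrable lborel (\<lambda>t. \<bar>t\<bar> * k t / ((x - t)^2 + y^2))"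
proof (rule int_bound[where C="B / y^2"])
  assume y: "0 < y"
  show "(\<lambda>t. \<bar>t\<bar> * k t / ((x - t)^2 + y^2)) \<in> borel_measurable lborel" by measurable
  fix t
  have d: "y^2 \<le> (x - t)^2 + y^2" by simp
  have p1: "0 < (x - t)^2 + y^2" using y by (simp add: add_nonneg_pos)
  have "norm (\<bar>t\<bar> * k t / ((x - t)^2 + y^2)) = \<bar>t\<bar> * k t / ((x - t)^2 + y^2)" using g_nonneg[of t] by simp
  also have "\<dots> \<le> \<bar>t\<bar> * k t / y^2" using y d g_nonneg[of t] p1 by (intro divide_left_mono) auto
  also have "\<dots> \<le> B * inverse (1 + t^2) / y^2" using b_g y by (intro divide_right_mono) auto
  finally show "norm (\<bar>t\<bar> * k t / ((x - t)^2 + y^2)) \<le> B / y^2 * inverse (1 + t^2)" by simp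
qed


definition J where "J x a b = (LINT t|lborel. \<bar>t\<bar> * k t / (((x - t)^2 + a^2) * ((x - t)^2 + b^2)))"

lemma den_pos: "0 < a \<Longrightarrow> 0 < (x - t)^2 + (a::real)^2" by (simp add: add_nonneg_pos)

lemma int_J: "0 < a \<Longrightarrow> 0 < b \<Longrightarrow> integrable lborel (\<lambda>t. \<bar>t\<bar> * k t / (((x - t)^2 + a^2) * ((x - t)^2 + b^2)))"
proof (rule int_bound[where C="B / (a^2 * b^2)"])
  assume a: "0 < a" and b: "0 < b"
  show "(\<lambda>t. \<bar>t\<bar> * k t / (((x - t)^2 + a^2) * ((x - t)^2 + b^2))) \<in> borel_measurable lborel" by measurable
  fix t
  have d: "a^2 * b^2 \<le> ((x - t)^2 + a^2) * ((x - t)^2 + b^2)" by (intro mult_mono) auto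
  have p: "0 < a^2 * b^2" using a b by simp
  have "norm (\<bar>t\<bar> * k t / (((x - t)^2 + a^2) * ((x - t)^2 + b^2))) = \<bar>t\<bar> * k t / (((x - t)^2 + a^2) * ((x - t)^2 + b^2))"
    using g_nonneg[of t] den_pos[OF a] den_pos[OF b] by simp
  also have "\<dots> \<le> \<bar>t\<bar> * k t / (a^2 * b^2)" using d g_nonneg[of t] p by (intro divide_left_mono) auto
  also have "\<dots> \<le> B * inverse (1 + t^2) / (a^2 * b^2)" using b_g p by (intro divide_right_mono) auto
  finally show "norm (\<bar>t\<bar> * k t / (((x - t)^2 + a^2) * ((x - t)^2 + b^2))) \<le> B / (a^2 * b^2) * inverse (1 + t^2)" by simp
qed

lemma F_diff: assumes a: "0 < a" and b: "0 < b"
  shows "Fk k x a - Fk k x b = (b^2 - a^2) * J x a b"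
proof -
  have "Fk k x a - Fk k x b = (LINT t|lborel. \<bar>t\<bar> * k t / ((x - t)^2 + a^2) - \<bar>t\<bar> * k t / ((x - t)^2 + b^2))"
    unfolding Fk_def using int_F[OF a] int_F[OF b] by simp
  also have "\<dots> = (LINT t|lborel. (b^2 - a^2) * (\<bar>t\<bar> * k t / (((x - t)^2 + a^2) * ((x - t)^2 + b^2))))"
  proof (rule Bochner_Integration.integral_cong[OF refl])
    fix t
    have p1: "(x - t)^2 + a^2 \<noteq> 0" and p2: "(x - t)^2 + b^2 \<noteq> 0" using den_pos[OF a] den_pos[OF b] by auto
    show "\<bar>t\<bar> * k t / ((x - t)^2 + a^2) - \<bar>t\<bar> * k t / ((x - t)^2 + b^2) = (b^2 - a^2) * (\<bar>t\<bar> * k t / (((x - t)^2 + a^2) * ((x - t)^2 + b^2)))"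
      using p1 p2 by (simp add: field_simps)
  qed
  also have "\<dots> = (b^2 - a^2) * J x a b" unfolding J_def by (rule integral_mult_right_zero)
  finally show ?thesis .
qed

lemma J_pos: "0 < a \<Longrightarrow> 0 < b \<Longrightarrow> 0 < J x a b"
  unfolding J_def
  by (rule pos_integral[OF int_J]) (auto intro!: divide_nonneg_pos divide_pos_pos mult_pos_pos g_pos g_nonneg den_pos)


lemma J_le: assumes a: "0 < a" and b: "0 < b" shows "J x a b \<le> M / (a^2 * b^2)"
proof -
  have p: "0 < a^2 * b^2" using a b by simp
  have "J x a b \<le> (LINT t|lborel. \<bar>t\<bar> * k t / (a^2 * b^2))" unfolding J_def
  proof (rule integral_mono[OF int_J[OF a b]])
    show "integrable lborel (\<lambda>t. \<bar>t\<bar> * k t / (a^2 * b^2))" using int_g by simp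
    fix t
    have d: "a^2 * b^2 \<le> ((x - t)^2 + a^2) * ((x - t)^2 + b^2)" by (intro mult_mono) auto
    show "\<bar>t\<bar> * k t / (((x - t)^2 + a^2) * ((x - t)^2 + b^2)) \<le> \<bar>t\<bar> * k t / (a^2 * b^2)"
      using d g_nonneg[of t] p by (intro divide_left_mono) auto
  qed
  also have "\<dots> = M / (a^2 * b^2)" unfolding M_def by simp
  finally show ?thesis .
qed

lemma J_mono: assumes a: "0 < a" and b: "0 < b" and bc: "b \<le> c" shows "J x a c \<le> J x a b"
proof -
  have c: "0 < c" using b bc by simp
  show ?thesis unfolding J_def
  proof (rule integral_mono[OF int_J[OF a c] int_J[OF a b]])
    fix t
    have "b^2 \<le> c^2" using b bc by (simp add: power_mono)
    then have d: "((x - t)^2 + a^2) * ((x - t)^2 + b^2) \<le> ((x - t)^2 + a^2) * ((x - t)^2 + c^2)"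
      using den_pos[OF a, of x t] by (intro mult_left_mono) auto
    have p: "0 < ((x - t)^2 + a^2) * ((x - t)^2 + b^2)" using den_pos[OF a] den_pos[OF b] by simp
    show "\<bar>t\<bar> * k t / (((x - t)^2 + a^2) * ((x - t)^2 + c^2)) \<le> \<bar>t\<bar> * k t / (((x - t)^2 + a^2) * ((x - t)^2 + b^2))"
      using d g_nonneg[of t] p by (intro divide_left_mono) auto
  qed
qed

lemma F_strict: "0 < a \<Longrightarrow> a < b \<Longrightarrow> Fk k x b < Fk k x a"
proof -
  assume a: "0 < a" and ab: "a < b"
  have "a^2 < b^2" using a ab by (intro power_strict_mono) auto
  then have "0 < (b^2 - a^2) * J x a b" using J_pos[of a b x] a ab by (intro mult_pos_pos) auto
  then show ?thesis using F_diff[of a b x] a ab by simp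
qed

lemma M_nonneg: "0 \<le> M" unfolding M_def by (intro integral_nonneg_AE) (simp add: g_nonneg)

lemma F_le: assumes y: "0 < y" shows "Fk k x y \<le> M / y^2"
proof -
  have "Fk k x y \<le> (LINT t|lborel. \<bar>t\<bar> * k t / y^2)" unfolding Fk_def
  proof (rule integral_mono[OF int_F[OF y]])
    show "integrable lborel (\<lambda>t. \<bar>t\<bar> * k t / y^2)" using int_g by simp
    fix t
    show "\<bar>t\<bar> * k t / ((x - t)^2 + y^2) \<le> \<bar>t\<bar> * k t / y^2"
      using g_nonneg[of t] y den_pos[OF y, of x t] by (intro divide_left_mono) auto
  qed
  also have "\<dots> = M / y^2" unfolding M_def by simp
  finally show ?thesis .
qed

lemma F_cont: assumes y: "0 < y" shows "isCont (Fk k x) y"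
proof -
  have "((\<lambda>s. Fk k x s - Fk k x y) \<longlongrightarrow> 0) (at y)"
  proof (rule Lim_null_comparison)
    show "\<forall>\<^sub>F s in at y. norm (Fk k x s - Fk k x y) \<le> \<bar>y^2 - s^2\<bar> * (M / (s^2 * y^2))"
      unfolding eventually_at
    proof (intro exI[of _ y] conjI ballI impI)
      show "0 < y" by (rule y)
      fix s assume "s \<in> UNIV" "s \<noteq> y \<and> dist s y < y"
      then have s: "0 < s" by (auto simp: dist_real_def)
      have "norm (Fk k x s - Fk k x y) = \<bar>y^2 - s^2\<bar> * J x s y"
        using F_diff[OF s y, of x] J_pos[OF s y, of x] by (simp add: abs_mult)
      also have "\<dots> \<le> \<bar>y^2 - s^2\<bar> * (M / (s^2 * y^2))"
        using J_le[OF s y, of x] by (intro mult_left_mono) auto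
      finally show "norm (Fk k x s - Fk k x y) \<le> \<bar>y^2 - s^2\<bar> * (M / (s^2 * y^2))" .
    qed
    have "isCont (\<lambda>s. \<bar>y^2 - s^2\<bar> * (M / (s^2 * y^2))) y"
      using y by (intro continuous_intros) auto
    then show "((\<lambda>s. \<bar>y^2 - s^2\<bar> * (M / (s^2 * y^2))) \<longlongrightarrow> 0) (at y)"
      unfolding isCont_def by simp
  qed
  then show ?thesis unfolding isCont_def by (rule LIM_zero_cancel)
qed

end



context kassm begin

lemma k_ge_pos: "0 < s \<Longrightarrow> s \<le> t \<Longrightarrow> k t \<le> k s"
  using monotone_onD[OF decr, of s t] by auto

lemma k_ge_neg: "t < 0 \<Longrightarrow> s \<le> t \<Longrightarrow> k s \<le> k t"
  using monotone_onD[OF incr, of s t] by auto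

lemma F_lower_pos:
  assumes x: "0 \<le> x" and y: "0 < y" "y < 1"
  shows "k (x + 1) / 2 * (- ln y) \<le> Fk k x y"
proof -
  define \<kappa> where "\<kappa> = k (x + 1)"
  have \<kappa>: "0 < \<kappa>" unfolding \<kappa>_def using pos[of "x+1"] x by simp
  define f where "f = (\<lambda>t. \<kappa> / 2 / (t - x))"
  have contf: "continuous_on {x + y .. x + 1} f" unfolding f_def
    using y by (intro continuous_intros) auto
  have int_l: "integrable lborel (\<lambda>t. indicator {x + y .. x + 1} t *\<^sub>R f t)"
    using borel_integrable_atLeastAtMost'[OF contf] by (simp add: set_integrable_def)
  have FTC: "(LINT t|lborel. indicator {x + y .. x + 1} t *\<^sub>R f t) = \<kappa> / 2 * ln ((x + 1) - x) - \<kappa> / 2 * ln ((x + y) - x)"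
  proof (rule integral_FTC_atLeastAtMost[of "x + y" "x + 1" "\<lambda>t. \<kappa> / 2 * ln (t - x)" f, OF _ _ contf])
    show "x + y \<le> x + 1" using y by simp
    fix t assume t: "x + y \<le> t" "t \<le> x + 1"
    have tx: "t - x \<noteq> 0" "0 < t - x" using t y by auto
    have d1: "((\<lambda>t. t - x) has_real_derivative 1 - 0) (at t)" by (intro DERIV_diff DERIV_ident DERIV_const)
    have d2: "(ln has_real_derivative inverse (t - x)) (at (t - x))" by (rule DERIV_ln[OF tx(2)])
    have d: "((\<lambda>t. \<kappa> / 2 * ln (t - x)) has_real_derivative \<kappa> / 2 * (inverse (t - x) * (1 - 0))) (at t)"
      by (rule DERIV_cmult[OF DERIV_chain2[OF d2 d1]])
    have e: "\<kappa> / 2 * (inverse (t - x) * (1 - 0)) = f t" unfolding f_def by (simp add: field_simps)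
    have "((\<lambda>t. \<kappa> / 2 * ln (t - x)) has_real_derivative f t) (at t)" using d[unfolded e] .
    then have "((\<lambda>t. \<kappa> / 2 * ln (t - x)) has_vector_derivative f t) (at t)"
      unfolding has_real_derivative_iff_has_vector_derivative .
    then show "((\<lambda>t. \<kappa> / 2 * ln (t - x)) has_vector_derivative f t) (at t within {x + y .. x + 1})"
      by (rule has_vector_derivative_at_within)
  qed
  have "(LINT t|lborel. indicator {x + y .. x + 1} t *\<^sub>R f t) \<le> Fk k x y" unfolding Fk_def
  proof (rule integral_mono[OF int_l int_F[OF y(1)]])
    fix t
    show "indicator {x + y .. x + 1} t *\<^sub>R f t \<le> \<bar>t\<bar> * k t / ((x - t)^2 + y^2)"
    proof (cases "t \<in> {x + y .. x + 1}")
      case False then show ?thesis using g_nonneg[of t] den_pos[OF y(1), of x t] by simp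
    next
      case True
      define u where "u = t - x"
      have u: "y \<le> u" "0 < u" "0 < t" "u \<le> t" using True y x u_def by auto
      have kt: "\<kappa> \<le> k t" unfolding \<kappa>_def using True u by (intro k_ge_pos) auto
      have g: "u * \<kappa> \<le> \<bar>t\<bar> * k t" using u kt \<kappa> by (intro mult_mono) auto
      have yu: "y^2 \<le> u^2" using u y by (intro power_mono) auto
      have den: "(x - t)^2 + y^2 \<le> 2 * u^2" using yu u_def by (simp add: power2_commute)
      have "indicator {x + y .. x + 1} t *\<^sub>R f t = \<kappa> / 2 / u"
        using True unfolding f_def u_def by simp
      also have "\<dots> = u * \<kappa> / (2 * u^2)" using u by (simp add: power2_eq_square field_simps)
      also have "\<dots> \<le> \<bar>t\<bar> * k t / (2 * u^2)" using g u by (intro divide_right_mono) auto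
      also have "\<dots> \<le> \<bar>t\<bar> * k t / ((x - t)^2 + y^2)"
        using den g_nonneg[of t] den_pos[OF y(1), of x t] u(2) by (intro divide_left_mono) (auto intro!: mult_pos_pos)
      finally show ?thesis .
    qed
  qed
  then show ?thesis using FTC \<kappa>_def by simp
qed

lemma F_lower_neg:
  assumes x: "x < 0" and y: "0 < y" "y < 1"
  shows "k (x - 1) / 2 * (- ln y) \<le> Fk k x y"
proof -
  define \<kappa> where "\<kappa> = k (x - 1)"
  have \<kappa>: "0 < \<kappa>" unfolding \<kappa>_def using pos[of "x-1"] x by simp
  define f where "f = (\<lambda>t. \<kappa> / 2 / (x - t))"
  have contf: "continuous_on {x - 1 .. x - y} f" unfolding f_def
    using y by (intro continuous_intros) auto
  have int_l: "integrable lborel (\<lambda>t. indicator {x - 1 .. x - y} t *\<^sub>R f t)"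
    using borel_integrable_atLeastAtMost'[OF contf] by (simp add: set_integrable_def)
  have FTC: "(LINT t|lborel. indicator {x - 1 .. x - y} t *\<^sub>R f t) = - (\<kappa> / 2) * ln (x - (x - y)) - - (\<kappa> / 2) * ln (x - (x - 1))"
  proof (rule integral_FTC_atLeastAtMost[of "x - 1" "x - y" "\<lambda>t. - (\<kappa> / 2) * ln (x - t)" f, OF _ _ contf])
    show "x - 1 \<le> x - y" using y by simp
    fix t assume t: "x - 1 \<le> t" "t \<le> x - y"
    have tx: "x - t \<noteq> 0" "0 < x - t" using t y by auto
    have d1: "((\<lambda>t. x - t) has_real_derivative 0 - 1) (at t)" by (intro DERIV_diff DERIV_ident DERIV_const)
    have d2: "(ln has_real_derivative inverse (x - t)) (at (x - t))" by (rule DERIV_ln[OF tx(2)])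
    have d: "((\<lambda>t. - (\<kappa> / 2) * ln (x - t)) has_real_derivative - (\<kappa> / 2) * (inverse (x - t) * (0 - 1))) (at t)"
      by (rule DERIV_cmult[OF DERIV_chain2[OF d2 d1]])
    have e: "- (\<kappa> / 2) * (inverse (x - t) * (0 - 1)) = f t" unfolding f_def by (simp add: field_simps)
    have "((\<lambda>t. - (\<kappa> / 2) * ln (x - t)) has_real_derivative f t) (at t)" using d[unfolded e] .
    then have "((\<lambda>t. - (\<kappa> / 2) * ln (x - t)) has_vector_derivative f t) (at t)"
      unfolding has_real_derivative_iff_has_vector_derivative .
    then show "((\<lambda>t. - (\<kappa> / 2) * ln (x - t)) has_vector_derivative f t) (at t within {x - 1 .. x - y})"
      by (rule has_vector_derivative_at_within)
  qed
  have "(LINT t|lborel. indicator {x - 1 .. x - y} t *\<^sub>R f t) \<le> Fk k x y" unfolding Fk_def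
  proof (rule integral_mono[OF int_l int_F[OF y(1)]])
    fix t
    show "indicator {x - 1 .. x - y} t *\<^sub>R f t \<le> \<bar>t\<bar> * k t / ((x - t)^2 + y^2)"
    proof (cases "t \<in> {x - 1 .. x - y}")
      case False then show ?thesis using g_nonneg[of t] den_pos[OF y(1), of x t] by simp
    next
      case True
      define u where "u = x - t"
      have u: "y \<le> u" "0 < u" "t < 0" "u \<le> \<bar>t\<bar>" using True y x u_def by auto
      have kt: "\<kappa> \<le> k t" unfolding \<kappa>_def using True u by (intro k_ge_neg) auto
      have g: "u * \<kappa> \<le> \<bar>t\<bar> * k t" using u kt \<kappa> by (intro mult_mono) auto
      have yu: "y^2 \<le> u^2" using u y by (intro power_mono) auto
      have den: "(x - t)^2 + y^2 \<le> 2 * u^2" using yu u_def by simp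
      have "indicator {x - 1 .. x - y} t *\<^sub>R f t = \<kappa> / 2 / u"
        using True unfolding f_def u_def by simp
      also have "\<dots> = u * \<kappa> / (2 * u^2)" using u by (simp add: power2_eq_square field_simps)
      also have "\<dots> \<le> \<bar>t\<bar> * k t / (2 * u^2)" using g u by (intro divide_right_mono) auto
      also have "\<dots> \<le> \<bar>t\<bar> * k t / ((x - t)^2 + y^2)"
        using den g_nonneg[of t] den_pos[OF y(1), of x t] u(2) by (intro divide_left_mono) (auto intro!: mult_pos_pos)
      finally show ?thesis .
    qed
  qed
  then show ?thesis using FTC \<kappa>_def by simp
qed

lemma F_big: "\<exists>y>0. 1 < Fk k x y"
proof -
  define \<kappa> where "\<kappa> = (if 0 \<le> x then k (x + 1) else k (x - 1))"
  have \<kappa>: "0 < \<kappa>" unfolding \<kappa>_def using pos[of "x+1"] pos[of "x-1"] by auto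
  define y where "y = exp (- (2 / \<kappa> + 1))"
  have "0 < 2 / \<kappa>" using \<kappa> by simp
  then have "- (2 / \<kappa> + 1) < 0" by linarith
  then have y: "0 < y" "y < 1" unfolding y_def by auto
  have ly: "- ln y = 2 / \<kappa> + 1" unfolding y_def by simp
  have "\<kappa> / 2 * (- ln y) \<le> Fk k x y"
    using F_lower_pos[OF _ y, of x] F_lower_neg[OF _ y, of x] \<kappa>_def by (cases "0 \<le> x") auto
  moreover have "\<kappa> / 2 * (- ln y) = 1 + \<kappa> / 2" using \<kappa> ly by (simp add: field_simps)
  ultimately show ?thesis using y \<kappa> by (intro exI[of _ y]) auto
qed

lemma part_i: "\<exists>!y. 0 < y \<and> Fk k x y = 1"
proof -
  obtain y1 where y1: "0 < y1" "1 < Fk k x y1" using F_big by blast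
  define y2 where "y2 = y1 + M + 1"
  have y2: "1 < y2" "M < y2" "y1 \<le> y2" using y1 M_nonneg y2_def by auto
  have "y2 \<le> y2^2" using y2 by (simp add: power2_eq_square)
  then have "M < y2^2" using y2 by simp
  then have m1: "M / y2^2 < 1" using y2 by simp
  have F2: "Fk k x y2 < 1" using F_le[of y2 x] y2 m1 by linarith
  obtain y where y: "y1 \<le> y" "y \<le> y2" "Fk k x y = 1"
    using IVT2[of "Fk k x" y2 1 y1] F2 y1 y2 F_cont by fastforce
  show ?thesis
  proof (rule ex1I[of _ y])
    show "0 < y \<and> Fk k x y = 1" using y y1 by simp
    fix y' assume y': "0 < y' \<and> Fk k x y' = 1"
    show "y' = y"
    proof (rule ccontr)
      assume "y' \<noteq> y"
      then consider "y' < y" | "y < y'" by linarith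
      then show False
        using F_strict[of y' y x] F_strict[of y y' x] y y' y1 by cases auto
    qed
  qed
qed

lemma vk_facts: "0 < vk k x" "Fk k x (vk k x) = 1"
  using theI'[OF part_i[of x]] unfolding vk_def by auto

lemma vk_eq: "0 < y \<Longrightarrow> Fk k x y = 1 \<longleftrightarrow> y = vk k x"
  using part_i[of x] vk_facts[of x] by blast

lemma vk_lt: assumes y: "0 < y" shows "Fk k x y < 1 \<longleftrightarrow> vk k x < y"
proof
  assume F1: "Fk k x y < 1"
  show "vk k x < y"
  proof (rule ccontr)
    assume "\<not> vk k x < y"
    then have "y < vk k x \<or> y = vk k x" by linarith
    then show False using F_strict[of y "vk k x" x] vk_facts[of x] y F1 by auto
  qed
next
  assume "vk k x < y"
  then show "Fk k x y < 1" using F_strict[of "vk k x" y x] vk_facts[of x] by auto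
qed

end



lemma Im_pt:
  fixes z :: complex and c t :: real
  shows "Im (z * (of_real c / (z - of_real t))) = - (Im z * (c * t) / ((Re z - t)^2 + (Im z)^2))"
proof -
  have e: "z * (of_real c / (z - of_real t)) = of_real c * (z / (z - of_real t))" by simp
  have m: "Im (of_real c * q) = c * Im q" for q by simp
  have "Im (z * (of_real c / (z - of_real t))) = c * Im (z / (z - of_real t))" by (subst e) (rule m)
  also have "Im (z / (z - of_real t)) = (Im z * (Re z - t) - Re z * Im z) / ((Re z - t)^2 + (Im z)^2)"
    by (simp add: Im_divide)
  also have "Im z * (Re z - t) - Re z * Im z = - (Im z * t)" by (simp add: algebra_simps)
  finally show ?thesis by simp
qed

lemma norm_ge_Im: "Im z \<le> norm (z - of_real t)"
  using abs_Im_le_cmod[of "z - of_real t"] by simp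

context kassm begin

definition f0 :: "real \<Rightarrow> complex" where "f0 t = complex_of_real (sgn t * k t)"
definition Phi where "Phi z = (LINT t|lborel. f0 t / (z - of_real t))"

lemma f0_meas[measurable]: "f0 \<in> borel_measurable borel" unfolding f0_def by measurable

lemma norm_f0: "norm (f0 t) \<le> B * inverse (1 + t^2)"
  using b_sk[of t] unfolding f0_def by (simp only: norm_of_real)

lemma Hk_eq: "Hk k z = z + z * Phi z" unfolding Hk_def Phi_def f0_def ..

lemma int_Phi: assumes z: "0 < Im z" shows "integrable lborel (\<lambda>t. f0 t / (z - of_real t))"
proof (rule int_bound[where C="B / Im z"])
  show "(\<lambda>t. f0 t / (z - of_real t)) \<in> borel_measurable lborel" by measurable
  fix t
  have "norm (f0 t / (z - of_real t)) = norm (f0 t) / norm (z - of_real t)" by (simp add: norm_divide)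
  also have "\<dots> \<le> norm (f0 t) / Im z" using z norm_ge_Im[of z t] by (intro divide_left_mono) (auto intro!: mult_pos_pos)
  also have "\<dots> \<le> B * inverse (1 + t^2) / Im z" using norm_f0 z by (intro divide_right_mono) auto
  finally show "norm (f0 t / (z - of_real t)) \<le> B / Im z * inverse (1 + t^2)" by simp
qed

lemma Im_H: assumes z: "0 < Im z" shows "Im (Hk k z) = Im z * (1 - Fk k (Re z) (Im z))"
proof -
  have i1: "integrable lborel (\<lambda>t. z * (f0 t / (z - of_real t)))" by (rule integrable_mult_right[OF int_Phi[OF z]])
  have "z * Phi z = (LINT t|lborel. z * (f0 t / (z - of_real t)))" unfolding Phi_def
    by (rule integral_mult_right_zero[symmetric])
  then have "Im (z * Phi z) = Im (LINT t|lborel. z * (f0 t / (z - of_real t)))" by simp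
  also have "\<dots> = (LINT t|lborel. Im (z * (f0 t / (z - of_real t))))" using i1 by simp
  also have "\<dots> = (LINT t|lborel. - (Im z * (\<bar>t\<bar> * k t / ((Re z - t)^2 + (Im z)^2))))"
  proof (rule Bochner_Integration.integral_cong[OF refl])
    fix t
    have "sgn t * k t * t = \<bar>t\<bar> * k t" by (cases "t = 0") (auto simp: sgn_if)
    then show "Im (z * (f0 t / (z - of_real t))) = - (Im z * (\<bar>t\<bar> * k t / ((Re z - t)^2 + (Im z)^2)))"
      unfolding f0_def Im_pt by simp
  qed
  also have "\<dots> = - (Im z * Fk k (Re z) (Im z))" unfolding Fk_def
    by (simp only: Bochner_Integration.integral_minus integral_mult_right_zero)
  finally show ?thesis unfolding Hk_eq by (simp add: algebra_simps)
qed


lemma im_ne: "0 < Im z \<Longrightarrow> z - of_real t \<noteq> 0"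
  using norm_ge_Im[of z t] by auto

lemma int_Phi1: assumes z: "0 < Im z" shows "integrable lborel (\<lambda>t. f0 t / (z - of_real t)^2)"
proof (rule int_bound[where C="B / (Im z)^2"])
  show "(\<lambda>t. f0 t / (z - of_real t)^2) \<in> borel_measurable lborel" by measurable
  fix t
  have n: "Im z \<le> norm (z - of_real t)" by (rule norm_ge_Im)
  have "(Im z)^2 \<le> (norm (z - of_real t))^2" using n z by (intro power_mono) auto
  then have "norm (f0 t / (z - of_real t)^2) \<le> norm (f0 t) / (Im z)^2"
    using z n by (simp add: norm_divide norm_power) (intro divide_left_mono, auto intro!: mult_pos_pos)
  also have "\<dots> \<le> B * inverse (1 + t^2) / (Im z)^2" using norm_f0 z by (intro divide_right_mono) auto
  finally show "norm (f0 t / (z - of_real t)^2) \<le> B / (Im z)^2 * inverse (1 + t^2)" by simp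
qed

lemma int_Phi2: assumes w: "0 < Im w" and z: "0 < Im z"
  shows "integrable lborel (\<lambda>t. f0 t / ((w - of_real t) * (z - of_real t)^2))"
proof (rule int_bound[where C="B / (Im w * (Im z)^2)"])
  show "(\<lambda>t. f0 t / ((w - of_real t) * (z - of_real t)^2)) \<in> borel_measurable lborel" by measurable
  fix t
  have n: "Im z \<le> norm (z - of_real t)" "Im w \<le> norm (w - of_real t)" by (rule norm_ge_Im)+
  have "(Im z)^2 \<le> (norm (z - of_real t))^2" using n z by (intro power_mono) auto
  then have d: "Im w * (Im z)^2 \<le> norm (w - of_real t) * (norm (z - of_real t))^2"
    using n w z by (intro mult_mono) auto
  have "norm (f0 t / ((w - of_real t) * (z - of_real t)^2)) = norm (f0 t) / (norm (w - of_real t) * (norm (z - of_real t))^2)"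
    by (simp add: norm_divide norm_mult norm_power)
  also have "\<dots> \<le> norm (f0 t) / (Im w * (Im z)^2)" using d w z by (intro divide_left_mono) (auto intro!: mult_pos_pos)
  also have "\<dots> \<le> B * inverse (1 + t^2) / (Im w * (Im z)^2)" using norm_f0 z w by (intro divide_right_mono) auto
  finally show "norm (f0 t / ((w - of_real t) * (z - of_real t)^2)) \<le> B / (Im w * (Im z)^2) * inverse (1 + t^2)" by simp
qed

definition Dphi where "Dphi z = - (LINT t|lborel. f0 t / (z - of_real t)^2)"

lemma pt_ident:
  fixes a w z d :: complex
  assumes "w \<noteq> 0" "z \<noteq> 0" "d = w - z"
  shows "a / w - a / z - d * (- (a / z^2)) = d^2 * (a / (w * z^2))"
  using assms(1,2) unfolding assms(3) by (simp add: field_simps power2_eq_square)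

lemma Phi_ident:
  assumes w: "0 < Im w" and z: "0 < Im z"
  shows "Phi w - Phi z - (w - z) * Dphi z = (w - z)^2 * (LINT t|lborel. f0 t / ((w - of_real t) * (z - of_real t)^2))"
proof -
  have i1: "integrable lborel (\<lambda>t. f0 t / (w - of_real t))" by (rule int_Phi[OF w])
  have i2: "integrable lborel (\<lambda>t. f0 t / (z - of_real t))" by (rule int_Phi[OF z])
  have i3: "integrable lborel (\<lambda>t. (w - z) * (- (f0 t / (z - of_real t)^2)))"
    by (intro integrable_mult_right integrable_minus int_Phi1[OF z])
  have "Phi w - Phi z - (w - z) * Dphi z
      = (LINT t|lborel. f0 t / (w - of_real t) - f0 t / (z - of_real t) - (w - z) * (- (f0 t / (z - of_real t)^2)))"
    using i1 i2 i3 unfolding Phi_def Dphi_def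
    by (simp only: Bochner_Integration.integral_diff
        Bochner_Integration.integrable_diff integral_mult_right_zero Bochner_Integration.integral_minus)
  also have "\<dots> = (LINT t|lborel. (w - z)^2 * (f0 t / ((w - of_real t) * (z - of_real t)^2)))"
    by (rule Bochner_Integration.integral_cong[OF refl], rule pt_ident) (use im_ne[OF w] im_ne[OF z] in simp_all)
  also have "\<dots> = (w - z)^2 * (LINT t|lborel. f0 t / ((w - of_real t) * (z - of_real t)^2))"
    by (rule integral_mult_right_zero)
  finally show ?thesis .
qed

lemma Phi_deriv: assumes z: "0 < Im z" shows "(Phi has_field_derivative Dphi z) (at z)"
proof -
  define y where "y = Im z"
  have y: "0 < y" using z y_def by simp
  define C where "C = (LINT t|lborel. B * inverse (1 + t^2)) * (2 / y^3)"
  have intw: "integrable lborel (\<lambda>t. B * inverse (1 + t^2) * (2 / y^3))" using int_w by simp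
  have bnd: "norm ((Phi w - Phi z) / (w - z) - Dphi z) \<le> norm (w - z) * C"
    if w: "w \<noteq> z" "dist w z < y / 2" for w
  proof -
    have "\<bar>Im w - Im z\<bar> \<le> norm (w - z)" using abs_Im_le_cmod[of "w - z"] by simp
    then have wy: "y / 2 < Im w" using w y_def by (simp add: dist_norm)
    then have w0: "0 < Im w" using y by simp
    have wz: "w - z \<noteq> 0" using w by simp
    have e: "(Phi w - Phi z) / (w - z) - Dphi z = (Phi w - Phi z - (w - z) * Dphi z) / (w - z)"
      using wz by (simp add: field_simps)
    have "Phi w - Phi z - (w - z) * Dphi z = (w - z)^2 * (LINT t|lborel. f0 t / ((w - of_real t) * (z - of_real t)^2))"
      by (rule Phi_ident[OF w0 z])
    then have e2: "(Phi w - Phi z) / (w - z) - Dphi z = (w - z) * (LINT t|lborel. f0 t / ((w - of_real t) * (z - of_real t)^2))"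
      using wz e by (simp add: power2_eq_square)
    have nI: "norm (LINT t|lborel. f0 t / ((w - of_real t) * (z - of_real t)^2)) \<le> C"
    proof -
      have "norm (LINT t|lborel. f0 t / ((w - of_real t) * (z - of_real t)^2)) \<le> (LINT t|lborel. B * inverse (1 + t^2) * (2 / y^3))"
      proof (rule Bochner_Integration.integral_norm_bound_integral[OF int_Phi2[OF w0 z] intw])
        fix t
        have n: "Im z \<le> norm (z - of_real t)" "Im w \<le> norm (w - of_real t)" by (rule norm_ge_Im)+
        have "y^2 \<le> (norm (z - of_real t))^2" using n y y_def by (intro power_mono) auto
        then have d: "y / 2 * y^2 \<le> norm (w - of_real t) * (norm (z - of_real t))^2"
          using n wy y by (intro mult_mono) auto
        have "norm (f0 t / ((w - of_real t) * (z - of_real t)^2)) = norm (f0 t) / (norm (w - of_real t) * (norm (z - of_real t))^2)"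
          by (simp add: norm_divide norm_mult norm_power)
        also have "\<dots> \<le> norm (f0 t) / (y / 2 * y^2)" using d y im_ne[OF w0, of t] im_ne[OF z, of t] by (intro divide_left_mono) (auto intro!: mult_pos_pos)
        also have "\<dots> \<le> B * inverse (1 + t^2) / (y / 2 * y^2)" using norm_f0 y by (intro divide_right_mono) auto
        also have "\<dots> = B * inverse (1 + t^2) * (2 / y^3)" by (simp add: power2_eq_square power3_eq_cube field_simps)
        finally show "norm (f0 t / ((w - of_real t) * (z - of_real t)^2)) \<le> B * inverse (1 + t^2) * (2 / y^3)" .
      qed
      also have "\<dots> = C" unfolding C_def by simp
      finally show ?thesis .
    qed
    show ?thesis unfolding e2 norm_mult using nI by (intro mult_left_mono) auto
  qed
  have "((\<lambda>w. (Phi w - Phi z) / (w - z) - Dphi z) \<longlongrightarrow> 0) (at z)"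
  proof (rule Lim_null_comparison)
    show "\<forall>\<^sub>F w in at z. norm ((Phi w - Phi z) / (w - z) - Dphi z) \<le> norm (w - z) * C"
      unfolding eventually_at using y bnd by (intro exI[of _ "y / 2"]) auto
    have "((\<lambda>w. norm (w - z) * C) \<longlongrightarrow> norm (z - z) * C) (at z)"
      by (intro tendsto_intros)
    then show "((\<lambda>w. norm (w - z) * C) \<longlongrightarrow> 0) (at z)" by simp
  qed
  then have "((\<lambda>w. (Phi w - Phi z) / (w - z)) \<longlongrightarrow> Dphi z) (at z)" by (rule LIM_zero_cancel)
  then show ?thesis by (simp add: has_field_derivative_iff)
qed

end



lemma decay_aux:
  fixes g \<delta> x t s :: real
  assumes g: "0 \<le> g" and d: "0 < \<delta>" and X: "1 + \<bar>x\<bar> \<le> 2 * (1 + \<bar>t\<bar>) * (1 + s^2)"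
  shows "g / (\<delta> * (1 + s^2)) \<le> 2 / \<delta> / (1 + \<bar>x\<bar>) * (g * (1 + \<bar>t\<bar>))"
proof -
  have p: "0 < 1 + s^2" "0 < 1 + \<bar>x\<bar>" by (simp_all add: add_pos_nonneg)
  have "g / (\<delta> * (1 + s^2)) = (g * (1 + \<bar>x\<bar>)) / (\<delta> * (1 + s^2) * (1 + \<bar>x\<bar>))"
    using p by simp
  also have "\<dots> \<le> (g * (2 * (1 + \<bar>t\<bar>) * (1 + s^2))) / (\<delta> * (1 + s^2) * (1 + \<bar>x\<bar>))"
    using p d g X by (intro divide_right_mono mult_left_mono) auto
  also have "\<dots> = (2 * g * (1 + \<bar>t\<bar>)) * (1 + s^2) / ((\<delta> * (1 + \<bar>x\<bar>)) * (1 + s^2))"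
    by (simp only: ac_simps)
  also have "\<dots> = (2 * g * (1 + \<bar>t\<bar>)) / (\<delta> * (1 + \<bar>x\<bar>))"
    by (rule nonzero_mult_divide_mult_cancel_right[OF less_imp_neq[OF p(1), symmetric]])
  also have "\<dots> = 2 / \<delta> / (1 + \<bar>x\<bar>) * (g * (1 + \<bar>t\<bar>))" by simp
  finally show ?thesis .
qed

lemma abs_le_sq2: "\<bar>t::real\<bar> \<le> 1 + t^2"
proof -
  have e: "t^2 = \<bar>t\<bar> * \<bar>t\<bar>" by (simp add: power2_eq_square)
  show ?thesis
  proof (cases "\<bar>t\<bar> \<le> 1")
    case True then show ?thesis by (simp add: add_increasing2)
  next
    case False
    then have "\<bar>t\<bar> * 1 \<le> \<bar>t\<bar> * \<bar>t\<bar>" by (intro mult_left_mono) auto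
    then show ?thesis using e by simp
  qed
qed

lemma peetre: "1 + \<bar>x::real\<bar> \<le> 2 * (1 + \<bar>t\<bar>) * (1 + (x - t)^2)"
proof -
  define s where "s = x - t"
  have "\<bar>x\<bar> \<le> \<bar>t\<bar> + \<bar>s\<bar>" unfolding s_def using abs_triangle_ineq[of t "x - t"] by simp
  moreover have "0 \<le> \<bar>t\<bar> * \<bar>s\<bar>" by simp
  ultimately have "1 + \<bar>x\<bar> \<le> 1 + \<bar>t\<bar> + \<bar>s\<bar> + \<bar>t\<bar> * \<bar>s\<bar>" by linarith
  also have "\<dots> = (1 + \<bar>t\<bar>) * (1 + \<bar>s\<bar>)" by (simp add: algebra_simps)
  also have "\<dots> \<le> (1 + \<bar>t\<bar>) * (2 * (1 + s^2))"
  proof (rule mult_left_mono)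
    show "1 + \<bar>s\<bar> \<le> 2 * (1 + s^2)" using abs_le_sq2[of s] by (smt (verit) zero_le_power2)
  qed simp
  also have "\<dots> = 2 * (1 + \<bar>t\<bar>) * (1 + (x - t)^2)" unfolding s_def by (simp only: ac_simps)
  finally show ?thesis .
qed

context kassm begin

lemma Hk_fun: "Hk k = (\<lambda>z. z + z * Phi z)" by (rule ext) (rule Hk_eq)

lemma H_deriv: "0 < Im z \<Longrightarrow> (Hk k has_field_derivative (1 + (1 * Phi z + Dphi z * z))) (at z)"
  unfolding Hk_fun by (intro DERIV_add DERIV_ident DERIV_mult Phi_deriv)

lemma H_hol: "Hk k holomorphic_on {z. 0 < Im z}"
  using H_deriv by (subst holomorphic_on_open) (auto simp: open_halfspace_Im_gt)

lemma curve: "0 < Im z \<Longrightarrow> Hk k z \<in> \<real> \<longleftrightarrow> Im z = vk k (Re z)"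
  using Im_H[of z] vk_eq[of "Im z" "Re z"] by (auto simp: complex_is_Real_iff)

lemma part_ii: "{z. 0 < Im z \<and> Hk k z \<in> \<real>} = {Complex x (vk k x) | x. True}"
proof (intro set_eqI iffI)
  fix z assume "z \<in> {z. 0 < Im z \<and> Hk k z \<in> \<real>}"
  then have "0 < Im z" "Im z = vk k (Re z)" using curve by auto
  then show "z \<in> {Complex x (vk k x) | x. True}" by (auto intro!: exI[of _ "Re z"] simp: complex_eq_iff)
next
  fix z assume "z \<in> {Complex x (vk k x) | x. True}"
  then obtain x where z: "z = Complex x (vk k x)" by auto
  then have "0 < Im z" using vk_facts by simp
  then show "z \<in> {z. 0 < Im z \<and> Hk k z \<in> \<real>}" using curve[of z] z by simp
qed

lemma part_iii: "{z. 0 < Im z \<and> 0 < Im (Hk k z)} = {Complex x y | x y. vk k x < y}"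
proof (intro set_eqI iffI)
  fix z assume "z \<in> {z. 0 < Im z \<and> 0 < Im (Hk k z)}"
  then have z: "0 < Im z" "0 < Im z * (1 - Fk k (Re z) (Im z))" using Im_H by auto
  then have "Fk k (Re z) (Im z) < 1" by (simp add: zero_less_mult_iff)
  then have "vk k (Re z) < Im z" using vk_lt z by blast
  moreover have "z = Complex (Re z) (Im z)" by simp
  ultimately show "z \<in> {Complex x y | x y. vk k x < y}" by blast
next
  fix z assume "z \<in> {Complex x y | x y. vk k x < y}"
  then obtain x y where z: "z = Complex x y" "vk k x < y" by auto
  then have y: "0 < y" using vk_facts[of x] by simp
  then have "Fk k x y < 1" using vk_lt z by blast
  then show "z \<in> {z. 0 < Im z \<and> 0 < Im (Hk k z)}" using Im_H[of z] z y by simp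
qed

lemma Re_deriv_pos: "0 < Re (deriv (Hk k) (Complex x0 (vk k x0)))"
proof -
  define y0 where "y0 = vk k x0"
  define z0 where "z0 = Complex x0 y0"
  have y0: "0 < y0" "Fk k x0 y0 = 1" using vk_facts y0_def by auto
  define H' where "H' = deriv (Hk k) z0"
  have DH: "(Hk k has_field_derivative H') (at z0)"
    unfolding H'_def using H_deriv[of z0] y0 z0_def DERIV_imp_deriv by fastforce
  define hv where "hv = (\<lambda>y. Im (Hk k (Complex x0 y)))"
  define p where "p = (\<lambda>w. of_real x0 + \<i> * w)"
  have pe: "p (of_real y) = Complex x0 y" for y unfolding p_def by (simp add: complex_eq_iff)
  have Dp: "(p has_field_derivative (0 + \<i> * 1)) (at (of_real y0))"
    unfolding p_def by (intro DERIV_add DERIV_const DERIV_cmult DERIV_ident)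
  have "((\<lambda>y. p (of_real y)) has_vector_derivative (0 + \<i> * 1)) (at y0)"
    by (rule has_vector_derivative_real_field[OF Dp])
  from field_vector_diff_chain_at[OF this, of "Hk k" H'] DH
  have "((\<lambda>y. Hk k (Complex x0 y)) has_vector_derivative \<i> * H') (at y0)"
    by (simp add: o_def pe z0_def)
  then have "((\<lambda>y. Hk k (Complex x0 y)) has_derivative (\<lambda>h. h *\<^sub>R (\<i> * H'))) (at y0)"
    by (simp add: has_vector_derivative_def)
  from has_derivative_Im[OF this]
  have "(hv has_derivative (\<lambda>h. Im (h *\<^sub>R (\<i> * H')))) (at y0)" unfolding hv_def .
  then have "(hv has_derivative (\<lambda>h. h * Re H')) (at y0)" by simp
  moreover have "(\<lambda>h. h * Re H') = (*) (Re H')" by (auto simp: fun_eq_iff)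
  ultimately have Dhv: "DERIV hv y0 :> Re H'" by (simp add: has_field_derivative_def)
  define J1 where "J1 = J x0 y0 (y0 + 1)"
  have J1: "0 < J1" unfolding J1_def using J_pos y0 by simp
  define c where "c = 2 * y0^2 * J1"
  have c: "0 < c" unfolding c_def using J1 y0 by simp
  have hv0: "hv y0 = 0" unfolding hv_def using Im_H[of z0] y0 z0_def by simp
  have low: "c * (y - y0) \<le> hv y" if y: "y0 < y" "y \<le> y0 + 1" for y
  proof -
    have yp: "0 < y" using y y0 by simp
    have "hv y = y * (1 - Fk k x0 y)" unfolding hv_def using Im_H[of "Complex x0 y"] yp by simp
    also have "1 - Fk k x0 y = (y^2 - y0^2) * J x0 y0 y" using F_diff[OF y0(1) yp, of x0] y0 by simp
    finally have hv: "hv y = y * ((y^2 - y0^2) * J x0 y0 y)" .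
    have Jm: "J1 \<le> J x0 y0 y" unfolding J1_def using J_mono[OF y0(1) yp] y by simp
    have sq: "(y - y0) * (2 * y0) \<le> y^2 - y0^2"
    proof -
      have "y^2 - y0^2 = (y - y0) * (y + y0)" by (simp add: algebra_simps power2_eq_square)
      moreover have "(y - y0) * (2 * y0) \<le> (y - y0) * (y + y0)" using y by (intro mult_left_mono) auto
      ultimately show ?thesis by simp
    qed
    have "c * (y - y0) = y0 * (((y - y0) * (2 * y0)) * J1)" unfolding c_def by (simp add: power2_eq_square algebra_simps)
    also have "\<dots> \<le> y * ((y^2 - y0^2) * J x0 y0 y)"
      using sq Jm J1 y y0 by (intro mult_mono) (auto intro!: mult_nonneg_nonneg)
    finally show ?thesis using hv by simp
  qed
  have "c \<le> Re H'"
  proof (rule ccontr)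
    assume "\<not> c \<le> Re H'"
    then have neg: "Re H' - c < 0" by simp
    have "DERIV (\<lambda>y. hv y - c * (y - y0)) y0 :> Re H' - c * (1 - 0)"
      by (intro DERIV_diff DERIV_cmult Dhv DERIV_ident DERIV_const)
    then have Dg: "DERIV (\<lambda>y. hv y - c * (y - y0)) y0 :> Re H' - c" by simp
    from DERIV_neg_dec_right[OF Dg neg] obtain d where d: "d > 0"
      "\<And>h. h > 0 \<Longrightarrow> h < d \<Longrightarrow> hv y0 - c * (y0 - y0) > hv (y0 + h) - c * (y0 + h - y0)"
      by blast
    define h where "h = min d 1 / 2"
    have h: "0 < h" "h < d" "h \<le> 1" using d h_def by auto
    have "hv (y0 + h) - c * (y0 + h - y0) < 0" using d(2)[OF h(1,2)] hv0 by simp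
    moreover have "c * (y0 + h - y0) \<le> hv (y0 + h)" using low[of "y0 + h"] h by simp
    ultimately show False by simp
  qed
  then show ?thesis using c H'_def z0_def y0_def by simp
qed

lemma part_iv: "real_analytic_on (vk k) UNIV"
  unfolding real_analytic_on_def
proof
  fix x0 :: real
  show "\<exists>r>0. \<exists>a. \<forall>x. \<bar>x - x0\<bar> < r \<longrightarrow> (\<lambda>n. a n * (x - x0) ^ n) sums vk k x"
  proof (rule analytic_from_curve[OF H_hol open_halfspace_Im_gt])
    show "\<And>z. z \<in> {z. 0 < Im z} \<Longrightarrow> Hk k z \<in> \<real> \<Longrightarrow> Im z = vk k (Re z)" using curve by auto
    show "Complex x0 (vk k x0) \<in> {z. 0 < Im z}" using vk_facts by simp
    show "Hk k (Complex x0 (vk k x0)) \<in> \<real>" using curve[of "Complex x0 (vk k x0)"] vk_facts by simp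
    show "0 < Re (deriv (Hk k) (Complex x0 (vk k x0)))" by (rule Re_deriv_pos)
  qed
qed

definition K2 where "K2 = (LINT t|lborel. \<bar>t\<bar> * (1 + \<bar>t\<bar>) * k t)"

lemma g2_nonneg: "0 \<le> \<bar>t\<bar> * (1 + \<bar>t\<bar>) * k t"
  by (cases "t = 0") (auto intro!: mult_nonneg_nonneg k_nonneg)

lemma int_g2: "integrable lborel (\<lambda>t. \<bar>t\<bar> * (1 + \<bar>t\<bar>) * k t)"
proof (rule int_bound[where C="2 * B"])
  show "(\<lambda>t. \<bar>t\<bar> * (1 + \<bar>t\<bar>) * k t) \<in> borel_measurable lborel" by measurable
  fix t
  show "norm (\<bar>t\<bar> * (1 + \<bar>t\<bar>) * k t) \<le> 2 * B * inverse (1 + t^2)"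
    using b_g2[of t] g2_nonneg[of t] by (simp only: real_norm_def abs_of_nonneg)
qed

lemma K2_nonneg: "0 \<le> K2" unfolding K2_def
  by (intro integral_nonneg_AE AE_I2) (rule g2_nonneg)

lemma F_decay: assumes e: "0 < e" shows "Fk k x e \<le> 2 / min 1 (e^2) / (1 + \<bar>x\<bar>) * K2"
proof -
  define \<delta> where "\<delta> = min 1 (e^2)"
  have d: "0 < \<delta>" "\<delta> \<le> 1" "\<delta> \<le> e^2" unfolding \<delta>_def using e by auto
  have "Fk k x e \<le> (LINT t|lborel. 2 / \<delta> / (1 + \<bar>x\<bar>) * (\<bar>t\<bar> * (1 + \<bar>t\<bar>) * k t))" unfolding Fk_def
  proof (rule integral_mono[OF int_F[OF e]])
    show "integrable lborel (\<lambda>t. 2 / \<delta> / (1 + \<bar>x\<bar>) * (\<bar>t\<bar> * (1 + \<bar>t\<bar>) * k t))"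
      using int_g2 by simp
    fix t
    have D: "\<delta> * (1 + (x - t)^2) \<le> (x - t)^2 + e^2"
    proof -
      have "\<delta> * (x - t)^2 \<le> 1 * (x - t)^2" using d by (intro mult_right_mono) auto
      then show ?thesis using d by (simp add: algebra_simps)
    qed
    have p: "0 < \<delta> * (1 + (x - t)^2)" using d by (simp add: add_pos_nonneg)
    have "\<bar>t\<bar> * k t / ((x - t)^2 + e^2) \<le> \<bar>t\<bar> * k t / (\<delta> * (1 + (x - t)^2))"
      using D p g_nonneg[of t] by (intro divide_left_mono) (auto intro!: mult_pos_pos)
    also have "\<dots> \<le> 2 / \<delta> / (1 + \<bar>x\<bar>) * (\<bar>t\<bar> * k t * (1 + \<bar>t\<bar>))"
      by (rule decay_aux[OF g_nonneg d(1) peetre])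
    also have "\<dots> = 2 / \<delta> / (1 + \<bar>x\<bar>) * (\<bar>t\<bar> * (1 + \<bar>t\<bar>) * k t)"
      by (simp only: ac_simps)
    finally show "\<bar>t\<bar> * k t / ((x - t)^2 + e^2) \<le> 2 / \<delta> / (1 + \<bar>x\<bar>) * (\<bar>t\<bar> * (1 + \<bar>t\<bar>) * k t)" .
  qed
  also have "\<dots> = 2 / \<delta> / (1 + \<bar>x\<bar>) * K2" unfolding K2_def by (rule integral_mult_right_zero)
  finally show ?thesis unfolding \<delta>_def .
qed

lemma part_v: "(vk k \<longlongrightarrow> 0) at_infinity"
proof (rule tendstoI)
  fix e :: real assume e: "0 < e"
  define \<delta> where "\<delta> = min 1 (e^2)"
  have d: "0 < \<delta>" unfolding \<delta>_def using e by auto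
  define R where "R = 2 / \<delta> * K2 + 1"
  show "\<forall>\<^sub>F x in at_infinity. dist (vk k x) 0 < e"
    unfolding eventually_at_infinity
  proof (intro exI allI impI)
    fix x :: real assume x: "R \<le> norm x"
    have px: "0 < 1 + \<bar>x\<bar>" by (simp add: add_pos_nonneg)
    have A: "2 / \<delta> * K2 < 1 * (1 + \<bar>x\<bar>)" using x R_def by simp
    have lt: "(2 / \<delta> * K2) / (1 + \<bar>x\<bar>) < 1" by (subst pos_divide_less_eq[OF px]) (rule A)
    have eq: "2 / \<delta> / (1 + \<bar>x\<bar>) * K2 = (2 / \<delta> * K2) / (1 + \<bar>x\<bar>)" by simp
    have "Fk k x e \<le> 2 / \<delta> / (1 + \<bar>x\<bar>) * K2" using F_decay[OF e, of x] unfolding \<delta>_def .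
    then have "Fk k x e < 1" using eq lt by linarith
    then have "vk k x < e" using vk_lt e by blast
    then show "dist (vk k x) 0 < e" using vk_facts[of x] by simp
  qed
qed

end

theorem lemma3p1:
  fixes k k1 k2 :: "real \<Rightarrow> real"
  assumes d1: "\<And>t. t \<noteq> 0 \<Longrightarrow> (k has_real_derivative k1 t) (at t)"
    and d2: "\<And>t. t \<noteq> 0 \<Longrightarrow> (k1 has_real_derivative k2 t) (at t)"
    and c2: "continuous_on (- {0}) k2"
    and bdd: "\<And>m::nat. m \<le> 2 \<Longrightarrow> \<exists>B. \<forall>t. t \<noteq> 0 \<longrightarrow>
                \<bar>(1 + t\<^sup>2) ^ m * k t\<bar> \<le> B \<and> \<bar>(1 + t\<^sup>2) ^ m * k1 t\<bar> \<le> B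
                \<and> \<bar>(1 + t\<^sup>2) ^ m * k2 t\<bar> \<le> B"
    and incr: "mono_on {..<0} k"
    and decr: "antimono_on {0<..} k"
    and pos: "\<And>t. t \<noteq> 0 \<Longrightarrow> 0 < k t"
  shows "(\<forall>x. \<exists>!y. 0 < y \<and> Fk k x y = 1)
    \<and> {z. 0 < Im z \<and> Hk k z \<in> \<real>} = {Complex x (vk k x) | x. True}
    \<and> {z. 0 < Im z \<and> 0 < Im (Hk k z)} = {Complex x y | x y. vk k x < y}
    \<and> real_analytic_on (vk k) UNIV
    \<and> (vk k \<longlongrightarrow> 0) at_infinity"
proof -
  obtain B where B: "\<forall>t. t \<noteq> 0 \<longrightarrow> \<bar>(1 + t\<^sup>2) ^ 2 * k t\<bar> \<le> B \<and> \<bar>(1 + t\<^sup>2) ^ 2 * k1 t\<bar> \<le> B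
                \<and> \<bar>(1 + t\<^sup>2) ^ 2 * k2 t\<bar> \<le> B"
    using bdd[of 2] by auto
  interpret kassm k B
  proof
    show "continuous_on (- {0}) k"
      by (rule continuous_at_imp_continuous_on) (use d1 DERIV_isCont in blast)
    show "\<And>t. t \<noteq> 0 \<Longrightarrow> 0 < k t" by (rule pos)
    show "mono_on {..<0} k" by (rule incr)
    show "antimono_on {0<..} k" by (rule decr)
    show "\<And>t. t \<noteq> 0 \<Longrightarrow> (1 + t^2)^2 * k t \<le> B" using B by (auto dest: abs_le_D1)
  qed
  show ?thesis using part_i part_ii part_iii part_iv part_v by blast
qed

end
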